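(* For every positive integer $n$, the number of quasi-Stirling permutations $\pi$ of size $n$ with $\operatorname{des}(\pi)=n$ is equal to $(n+1)^{n-1}$.
   Context: A quasi-Stirling permutation of size $n$ is a sequence $\pi=\pi_1\pi_2\cdots\pi_{2n}$ that is a permutation of the multiset $\{1,1,2,2,\dots,n,n\}$ and avoids the patterns $1212$ and $2121$, i.e. there are no indices $i<j<k<\ell$ with $\pi_i=\pi_k$ and $\pi_j=\pi_\ell$. For a sequence $\pi=\pi_1\cdots\pi_r$ of positive integers, an index $i\in\{1,\dots,r\}$ is a descent if $\pi_i>\pi_{i+1}$ or $i=r$ (so the last position always counts as a descent), and $\operatorname{des}(\pi)$ is the number of descents. *)

theory Defs
  imports Main "HOL-Library.Multiset"
begin

definition is_perm_of_double_multiset :: "nat \<Rightarrow> nat list \<Rightarrow> bool" where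
  "is_perm_of_double_multiset n \<pi> \<longleftrightarrow> mset \<pi> = (\<Sum>i\<in>{1..n}. {#i, i#})"

definition avoids_1212_2121 :: "nat list \<Rightarrow> bool" where
  "avoids_1212_2121 \<pi> \<longleftrightarrow>
     \<not> (\<exists>i j k l. i < j \<and> j < k \<and> k < l \<and> l < length \<pi> \<and>
            \<pi> ! i = \<pi> ! k \<and> \<pi> ! j = \<pi> ! l)"

definition quasi_stirling :: "nat \<Rightarrow> nat list \<Rightarrow> bool" where
  "quasi_stirling n \<pi> \<longleftrightarrow> is_perm_of_double_multiset n \<pi> \<and> avoids_1212_2121 \<pi>"

text \<open>Descents: positions i (1-based, 1..r) with pi_i > pi_(i+1), or i = r.
  In 0-based indexing: i < r - 1 with pi!i > pi!(i+1), or i = r - 1.\<close>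
definition des :: "nat list \<Rightarrow> nat" where
  "des \<pi> = card {i. i < length \<pi> \<and> (i = length \<pi> - 1 \<or> \<pi> ! i > \<pi> ! (i + 1))}"

end

theory Submission
  imports Defs "HOL-Library.FuncSet"
begin

lemma sum_pow_card:
  assumes "finite M"
  shows "(\<Sum>J\<in>Pow M. F (card J)) = (\<Sum>j\<le>card M. (card M choose j) * (F j :: nat))"
proof -
  have "(\<Sum>J\<in>Pow M. F (card J)) = (\<Sum>j\<in>{..card M}. \<Sum>J | J \<in> Pow M \<and> card J = j. F (card J))"
    by (rule sum.group[symmetric]) (use assms in \<open>auto simp: card_mono\<close>)
  also have "\<dots> = (\<Sum>j\<le>card M. (card M choose j) * F j)"
  proof (rule sum.cong[OF refl])
    fix j assume "j \<in> {..card M}"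
    have "(\<Sum>J | J \<in> Pow M \<and> card J = j. F (card J)) = (\<Sum>J | J \<subseteq> M \<and> card J = j. F j)"
      by (rule sum.cong) auto
    also have "\<dots> = card {J. J \<subseteq> M \<and> card J = j} * F j" by simp
    also have "\<dots> = (card M choose j) * F j" using n_subsets[OF assms] by simp
    finally show "(\<Sum>J | J \<in> Pow M \<and> card J = j. F (card J)) = (card M choose j) * F j" .
  qed
  finally show ?thesis .
qed

inductive reach :: "(nat \<Rightarrow> nat) \<Rightarrow> nat set \<Rightarrow> nat set \<Rightarrow> nat \<Rightarrow> bool" for f A P where
  reach_base: "x \<in> P \<Longrightarrow> reach f A P x"
| reach_step: "x \<in> A \<Longrightarrow> reach f A P (f x) \<Longrightarrow> reach f A P x"

definition Par :: "nat set \<Rightarrow> nat set \<Rightarrow> (nat \<Rightarrow> nat) set" where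
  "Par M P = {f. f \<in> M \<rightarrow>\<^sub>E (M \<union> P) \<and> (\<forall>x\<in>M. reach f M P x)}"

definition Acnt :: "nat \<Rightarrow> nat \<Rightarrow> nat" where
  "Acnt m k = (if m = 0 then 1 else k * (m + k) ^ (m - 1))"

lemma Acnt_term:
  assumes "i \<le> n"
  shows "(Suc n choose Suc i) * (k ^ Suc i * Acnt (Suc n - Suc i) (Suc i)) = k * ((n choose i) * k ^ i * Suc n ^ (n - i))"
proof (cases "i = n")
  case True then show ?thesis by (simp add: Acnt_def)
next
  case False
  then obtain d where d: "n - i = Suc d" using assms
    by (metis Suc_diff_Suc le_neq_implies_less)
  have e1: "Suc n - Suc i = Suc d" and e2: "Suc d + Suc i = Suc n" using d assms by auto
  have A: "Acnt (Suc n - Suc i) (Suc i) = Suc i * Suc n ^ d"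
    unfolding e1 Acnt_def using e2 by simp
  have B: "(Suc n choose Suc i) * Suc i = Suc n * (n choose i)"
    using Suc_times_binomial_eq[of n i] by simp
  have "(Suc n choose Suc i) * (k ^ Suc i * Acnt (Suc n - Suc i) (Suc i))
      = k * k ^ i * (((Suc n choose Suc i) * Suc i) * Suc n ^ d)"
    unfolding A by (simp only: power_Suc mult_ac)
  also have "\<dots> = k * k ^ i * ((n choose i) * (Suc n * Suc n ^ d))"
    unfolding B by (simp only: mult_ac)
  also have "\<dots> = k * ((n choose i) * k ^ i * Suc n ^ (n - i))"
    unfolding d power_Suc by (simp only: mult_ac)
  finally show ?thesis .
qed
lemma Acnt_sum:
  "(\<Sum>j\<le>Suc n. (Suc n choose j) * (k ^ j * Acnt (Suc n - j) j)) = Acnt (Suc n) k"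
proof -
  have "(\<Sum>j\<le>Suc n. (Suc n choose j) * (k ^ j * Acnt (Suc n - j) j))
     = (\<Sum>i\<le>n. (Suc n choose Suc i) * (k ^ Suc i * Acnt (Suc n - Suc i) (Suc i)))"
    by (subst sum.atMost_Suc_shift) (simp add: Acnt_def)
  also have "\<dots> = (\<Sum>i\<le>n. k * ((n choose i) * k ^ i * Suc n ^ (n - i)))"
    by (rule sum.cong[OF refl], rule Acnt_term) simp
  also have "\<dots> = k * (k + Suc n) ^ n"
    using binomial_ring[of k "Suc n" n] by (simp add: sum_distrib_left)
  finally show ?thesis unfolding Acnt_def by (simp only: add.commute[of k "Suc n"]) simp
qed

lemma reach_empty: "reach f A P x \<Longrightarrow> P = {} \<Longrightarrow> False"
  by (induction rule: reach.induct) auto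

lemma Par_finite: "finite M \<Longrightarrow> finite P \<Longrightarrow> finite (Par M P)"
  unfolding Par_def by (rule finite_subset[of _ "M \<rightarrow>\<^sub>E (M \<union> P)"]) (auto intro: finite_PiE)

definition comb :: "nat set \<Rightarrow> (nat \<Rightarrow> nat) \<Rightarrow> (nat \<Rightarrow> nat) \<Rightarrow> nat \<Rightarrow> nat" where
  "comb J h g = (\<lambda>x. if x \<in> J then h x else g x)"

lemma reach_comb1:
  assumes "reach g B J x" "x \<in> M" "B = M - J" "J \<subseteq> M" "h \<in> J \<rightarrow> P" "g \<in> B \<rightarrow> M"
  shows "reach (comb J h g) M P x"
  using assms
proof (induction rule: reach.induct)
  case (reach_base x)
  have "comb J h g x \<in> P" using reach_base by (auto simp: comb_def)
  then have r: "reach (comb J h g) M P (comb J h g x)" by (rule reach.intros(1))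
  show ?case by (rule reach.intros(2)[OF _ r]) (use reach_base in auto)
next
  case (reach_step x)
  then have x: "x \<notin> J" "g x \<in> M" by auto
  then have r: "reach (comb J h g) M P (comb J h g x)" using reach_step by (simp add: comb_def)
  show ?case by (rule reach.intros(2)[OF _ r]) (use reach_step in auto)
qed

lemma reach_comb2:
  assumes "reach f M P x" "x \<in> M" "J = {x\<in>M. f x \<in> P}" "f \<in> M \<rightarrow> M \<union> P" "M \<inter> P = {}"
  shows "reach f (M - J) J x"
  using assms
proof (induction rule: reach.induct)
  case (reach_base x)
  then show ?case by auto
next
  case (reach_step x)
  show ?case
  proof (cases "x \<in> J")
    case True then show ?thesis by (rule reach.intros(1))
  next
    case False
    then have "f x \<in> M" using reach_step by auto
    then have r: "reach f (M - J) J (f x)" using reach_step by blast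
    show ?thesis by (rule reach.intros(2)[OF _ r]) (use reach_step False in auto)
  qed
qed

lemma reach_cong:
  assumes "reach g A P x" "\<forall>y\<in>A. f y = g y"
  shows "reach f A P x"
  using assms
proof (induction rule: reach.induct)
  case (reach_base x) show ?case by (rule reach.intros(1)) fact
next
  case (reach_step x)
  then have r: "reach f A P (f x)" by simp
  show ?case by (rule reach.intros(2)[OF _ r]) fact
qed

lemma Par_decomp:
  assumes "finite M" "finite P" "M \<inter> P = {}" "M \<noteq> {}"
  shows "Par M P = (\<Union>J\<in>Pow M - {{}}. (\<lambda>(h,g). comb J h g) ` ((J \<rightarrow>\<^sub>E P) \<times> Par (M - J) J))"
proof (intro equalityI subsetI)
  fix f assume f: "f \<in> Par M P"
  define J where "J = {x\<in>M. f x \<in> P}"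
  obtain x where x: "x \<in> M" using assms by auto
  have rx: "reach f M P x" using f x by (auto simp: Par_def)
  have "J \<noteq> {}"
  proof
    assume J: "J = {}"
    have "reach f (M - J) J x"
      by (rule reach_comb2[OF rx x J_def]) (use f assms in \<open>auto simp: Par_def PiE_def\<close>)
    then show False using J reach_empty by blast
  qed
  moreover have "restrict f J \<in> J \<rightarrow>\<^sub>E P" unfolding J_def by auto
  moreover have "restrict f (M - J) \<in> Par (M - J) J"
  proof -
    have "restrict f (M - J) \<in> (M - J) \<rightarrow>\<^sub>E (M - J \<union> J)"
      using f by (auto simp: Par_def J_def PiE_def Pi_def)
    moreover have "reach (restrict f (M - J)) (M - J) J y" if "y \<in> M - J" for y
    proof -
      have "reach f (M - J) J y"
        by (rule reach_comb2[OF _ _ J_def]) (use f assms that in \<open>auto simp: Par_def PiE_def\<close>)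
      then show ?thesis by (rule reach_cong) auto
    qed
    ultimately show ?thesis by (auto simp: Par_def)
  qed
  moreover have "f = comb J (restrict f J) (restrict f (M - J))"
    using f by (auto simp: comb_def Par_def PiE_def extensional_def fun_eq_iff J_def)
  moreover have "J \<in> Pow M" by (auto simp: J_def)
  ultimately have "J \<in> Pow M - {{}}" "f \<in> (\<lambda>(h,g). comb J h g) ` ((J \<rightarrow>\<^sub>E P) \<times> Par (M - J) J)"
    by (auto intro!: image_eqI[of _ _ "(restrict f J, restrict f (M - J))"])
  then show "f \<in> (\<Union>J\<in>Pow M - {{}}. (\<lambda>(h,g). comb J h g) ` ((J \<rightarrow>\<^sub>E P) \<times> Par (M - J) J))"
    by (rule UN_I)
next
  fix f assume "f \<in> (\<Union>J\<in>Pow M - {{}}. (\<lambda>(h,g). comb J h g) ` ((J \<rightarrow>\<^sub>E P) \<times> Par (M - J) J))"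
  then obtain J h g where J: "J \<subseteq> M" and h: "h \<in> J \<rightarrow>\<^sub>E P" and g: "g \<in> Par (M - J) J"
    and f: "f = comb J h g" by auto
  have gi: "g \<in> (M - J) \<rightarrow>\<^sub>E M" using g J by (auto simp: Par_def PiE_def Pi_def)
  have "f \<in> M \<rightarrow>\<^sub>E (M \<union> P)"
    using h gi J by (auto simp: f comb_def PiE_def Pi_def extensional_def)
  moreover have "reach f M P x" if "x \<in> M" for x
  proof -
    have "reach g (M - J) J x"
    proof (cases "x \<in> J")
      case True then show ?thesis by (rule reach.intros)
    next
      case False then show ?thesis using g that by (auto simp: Par_def)
    qed
    then show ?thesis unfolding f
      by (rule reach_comb1) (use that J h gi in \<open>auto simp: PiE_def\<close>)
  qed
  ultimately show "f \<in> Par M P" by (auto simp: Par_def)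
qed

lemma card_Par:
  "finite M \<Longrightarrow> finite P \<Longrightarrow> M \<inter> P = {} \<Longrightarrow> card (Par M P) = Acnt (card M) (card P)"
proof (induction "card M" arbitrary: M P rule: less_induct)
  case less
  show ?case
  proof (cases "M = {}")
    case True
    then have "Par M P = {\<lambda>x. undefined}" by (auto simp: Par_def)
    then show ?thesis using True by (simp add: Acnt_def)
  next
    case ne: False
    let ?F = "\<lambda>J. (\<lambda>(h,g). comb J h g) ` ((J \<rightarrow>\<^sub>E P) \<times> Par (M - J) J)"
    have cJ: "card (?F J) = card P ^ card J * Acnt (card M - card J) (card J)"
      if J: "J \<in> Pow M - {{}}" for J
    proof -
      have fin: "finite J" using J less.prems finite_subset by auto
      have "inj_on (\<lambda>(h,g). comb J h g) ((J \<rightarrow>\<^sub>E P) \<times> Par (M - J) J)"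
      proof (rule inj_onI, clarify)
        fix h g h' g'
        assume a: "h \<in> J \<rightarrow>\<^sub>E P" "g \<in> Par (M - J) J" "h' \<in> J \<rightarrow>\<^sub>E P" "g' \<in> Par (M - J) J"
          "comb J h g = comb J h' g'"
        have "h = h'"
        proof
          fix x
          have "comb J h g x = comb J h' g' x" using a(5) by simp
          then show "h x = h' x" using a(1,3)
            by (cases "x \<in> J") (auto simp: comb_def PiE_def extensional_def)
        qed
        moreover have "g = g'"
        proof
          fix x
          have "comb J h g x = comb J h' g' x" using a(5) by simp
          moreover have "g \<in> extensional (M - J)" "g' \<in> extensional (M - J)"
            using a(2,4) by (auto simp: Par_def PiE_def)
          ultimately show "g x = g' x"
            by (cases "x \<in> J") (auto simp: comb_def extensional_def)
        qed
        ultimately show "h = h' \<and> g = g'" by simp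
      qed
      then have "card (?F J) = card (J \<rightarrow>\<^sub>E P) * card (Par (M - J) J)"
        by (simp add: card_image card_cartesian_product)
      also have "card (Par (M - J) J) = Acnt (card (M - J)) (card J)"
        using J fin less by (intro less.hyps) (auto intro!: psubset_card_mono)
      also have "card (M - J) = card M - card J" using J fin by (auto intro: card_Diff_subset)
      finally show ?thesis using fin by (simp add: card_funcsetE)
    qed
    have "card (Par M P) = card (\<Union>J\<in>Pow M - {{}}. ?F J)"
      using Par_decomp[OF less.prems ne] by simp
    also have "\<dots> = (\<Sum>J\<in>Pow M - {{}}. card (?F J))"
    proof (rule card_UN_disjoint)
      show "finite (Pow M - {{}})" using less.prems by simp
      show "\<forall>J\<in>Pow M - {{}}. finite (?F J)"
      proof
        fix J assume "J \<in> Pow M - {{}}"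
        then have "finite J" using less.prems(1) by (auto dest: finite_subset)
        then show "finite (?F J)" using less.prems
          by (intro finite_imageI finite_cartesian_product finite_PiE Par_finite) auto
      qed
      show "\<forall>J\<in>Pow M - {{}}. \<forall>J'\<in>Pow M - {{}}. J \<noteq> J' \<longrightarrow> ?F J \<inter> ?F J' = {}"
      proof (intro ballI impI)
        fix J J' assume JJ: "J \<in> Pow M - {{}}" "J' \<in> Pow M - {{}}" "J \<noteq> J'"
        have key: "J = {x\<in>M. f x \<in> P}" if "f \<in> ?F J" "J \<in> Pow M - {{}}" for f J
        proof -
          from that obtain h g where h: "h \<in> J \<rightarrow>\<^sub>E P" and g: "g \<in> Par (M - J) J"
            and f: "f = comb J h g" by auto
          have JM: "J \<subseteq> M" using that(2) by auto
          have "g x \<in> M" if "x \<in> M - J" for x using g that JM by (auto simp: Par_def PiE_def Pi_def)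
          then show ?thesis using h that(2) less.prems(3) by (auto simp: f comb_def PiE_def Pi_def)
        qed
        show "?F J \<inter> ?F J' = {}"
        proof (rule equals0I)
          fix f assume ff: "f \<in> ?F J \<inter> ?F J'"
          have "J = {x\<in>M. f x \<in> P}" using ff key[OF _ JJ(1)] by blast
          moreover have "J' = {x\<in>M. f x \<in> P}" using ff key[OF _ JJ(2)] by blast
          ultimately have "J = J'" by simp
          then show False using JJ(3) by simp
        qed
      qed
    qed
    also have "\<dots> = (\<Sum>J\<in>Pow M - {{}}. card P ^ card J * Acnt (card M - card J) (card J))"
      by (rule sum.cong) (use cJ in auto)
    also have "\<dots> = (\<Sum>J\<in>Pow M. card P ^ card J * Acnt (card M - card J) (card J))
                   - card P ^ 0 * Acnt (card M) 0"
      using less.prems by (subst sum_diff1_nat) auto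
    also have "Acnt (card M) 0 = 0" using ne less.prems by (simp add: Acnt_def)
    also have "(\<Sum>J\<in>Pow M. card P ^ card J * Acnt (card M - card J) (card J))
       = (\<Sum>j\<le>card M. (card M choose j) * (card P ^ j * Acnt (card M - j) j))"
      by (rule sum_pow_card) (use less.prems in auto)
    also have "\<dots> = Acnt (card M) (card P)"
      using ne less.prems Acnt_sum[of "card M - 1" "card P"] by (cases "card M") auto
    finally show ?thesis by simp
  qed
qed

definition cycdec :: "nat \<Rightarrow> nat \<Rightarrow> nat \<Rightarrow> bool" where
  "cycdec q a b \<longleftrightarrow> (a < q \<and> (q < b \<or> b < a)) \<or> (q < a \<and> q < b \<and> b < a)"

inductive NC :: "nat list \<Rightarrow> bool" where
  NC_nil: "NC []"
| NC_cons: "NC \<sigma> \<Longrightarrow> NC \<tau> \<Longrightarrow> r \<notin> set \<sigma> \<Longrightarrow> r \<notin> set \<tau> \<Longrightarrow> set \<sigma> \<inter> set \<tau> = {}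
    \<Longrightarrow> NC (r # \<sigma> @ r # \<tau>)"

inductive W :: "nat \<Rightarrow> nat list \<Rightarrow> bool" where
  W_nil: "W q []"
| W_cons: "W r \<sigma> \<Longrightarrow> W q \<tau> \<Longrightarrow> r \<noteq> q \<Longrightarrow> q \<notin> set \<sigma> \<Longrightarrow> r \<notin> set \<tau> \<Longrightarrow> set \<sigma> \<inter> set \<tau> = {}
    \<Longrightarrow> (\<tau> = [] \<or> cycdec q r (hd \<tau>)) \<Longrightarrow> W q (r # \<sigma> @ r # \<tau>)"

fun dq :: "nat list \<Rightarrow> nat \<Rightarrow> nat" where
  "dq [] q = 0"
| "dq (x # xs) q = (if hd (xs @ [q]) < x then 1 else 0) + dq xs q"

definition E :: "nat list \<Rightarrow> nat \<Rightarrow> nat" where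
  "E \<pi> q = (if hd (\<pi> @ [q]) < q then 1 else 0) + dq \<pi> q"

lemma tw: "r \<notin> set \<sigma> \<Longrightarrow> takeWhile (\<lambda>x. x \<noteq> r) (\<sigma> @ r # \<tau>) = \<sigma> \<and> dropWhile (\<lambda>x. x \<noteq> r) (\<sigma> @ r # \<tau>) = r # \<tau>"
  by (induction \<sigma>) auto

lemma decomp_unique:
  assumes "r \<notin> set \<sigma>" "r \<notin> set \<sigma>'" "\<sigma> @ r # \<tau> = \<sigma>' @ r # \<tau>'"
  shows "\<sigma> = \<sigma>' \<and> \<tau> = \<tau>'"
proof -
  note a = tw[OF assms(1), of \<tau>] and b = tw[OF assms(2), of \<tau>']
  have "\<sigma> = \<sigma>'" using a b assms(3) by metis
  moreover have "r # \<tau> = r # \<tau>'" using a b assms(3) by metis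
  ultimately show ?thesis by simp
qed

lemma W_notin: "W q \<pi> \<Longrightarrow> q \<notin> set \<pi>"
  by (induction rule: W.induct) auto

lemma W_NC: "W q \<pi> \<Longrightarrow> NC \<pi>"
  by (induction rule: W.induct) (auto intro!: NC.intros dest: W_notin)

lemma W_inv:
  assumes "W q (r # \<sigma> @ r # \<tau>)" "r \<notin> set \<sigma>"
  shows "W r \<sigma> \<and> W q \<tau> \<and> (\<tau> = [] \<or> cycdec q r (hd \<tau>))"
  using assms(1) apply (rule W.cases) apply simp
  subgoal premises p for ra \<sigma>' qa \<tau>'
  proof -
    have rr: "r = ra" using p(2) by simp
    have e: "\<sigma> @ r # \<tau> = \<sigma>' @ r # \<tau>'" using p(2) rr by simp
    have "r \<notin> set \<sigma>'" using p(3) W_notin rr by blast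
    then have "\<sigma> = \<sigma>' \<and> \<tau> = \<tau>'" using decomp_unique[OF assms(2) _ e] by blast
    then show ?thesis using p rr by simp
  qed
  done

lemma dq_append: "dq (xs @ ys) q = dq xs (hd (ys @ [q])) + dq ys q"
  by (induction xs) (auto simp: hd_append)

lemma E_cons:
  "E (r # \<sigma> @ r # \<tau>) q + (if hd (\<tau> @ [q]) < q then 1 else 0)
   = (if r < q then 1 else 0) + E \<sigma> r + (if hd (\<tau> @ [q]) < r then 1 else 0) + E \<tau> q"
proof -
  have "dq (r # \<sigma> @ r # \<tau>) q = (if hd (\<sigma> @ [r]) < r then 1 else 0) + dq \<sigma> r
          + (if hd (\<tau> @ [q]) < r then 1 else 0) + dq \<tau> q"
    by (simp add: dq_append hd_append)
  then show ?thesis by (simp add: E_def)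
qed

lemma key_arith:
  fixes q r h :: nat
  assumes "r \<noteq> q" "h \<noteq> r"
  shows "(if r < q then 1 else 0) + (if h < r then 1 else 0) \<le> (1::nat) + (if h < q then 1 else 0)"
    and "((if r < q then 1 else 0) + (if h < r then 1 else 0) = (1::nat) + (if h < q then 1 else 0))
         \<longleftrightarrow> (h = q \<or> cycdec q r h)"
  using assms by (auto simp: cycdec_def)

lemma main_char:
  "NC \<pi> \<Longrightarrow> q \<notin> set \<pi> \<Longrightarrow> E \<pi> q \<le> card (set \<pi>) \<and> (E \<pi> q = card (set \<pi>) \<longleftrightarrow> W q \<pi>)"
proof (induction \<pi> arbitrary: q rule: NC.induct)
  case NC_nil
  then show ?case by (simp add: E_def W_nil)
next
  case (NC_cons \<sigma> \<tau> r)
  let ?h = "hd (\<tau> @ [q])"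
  have qr: "r \<noteq> q" "q \<notin> set \<sigma>" "q \<notin> set \<tau>" using NC_cons.prems by auto
  have IH1: "E \<sigma> r \<le> card (set \<sigma>) \<and> (E \<sigma> r = card (set \<sigma>) \<longleftrightarrow> W r \<sigma>)"
    using NC_cons.IH(1) NC_cons.hyps(3) by blast
  have IH2: "E \<tau> q \<le> card (set \<tau>) \<and> (E \<tau> q = card (set \<tau>) \<longleftrightarrow> W q \<tau>)"
    using NC_cons.IH(2) qr by blast
  have card: "card (set (r # \<sigma> @ r # \<tau>)) = 1 + card (set \<sigma>) + card (set \<tau>)"
  proof -
    have "set (r # \<sigma> @ r # \<tau>) = insert r (set \<sigma> \<union> set \<tau>)" by auto
    then show ?thesis using NC_cons.hyps(3-5) by (simp add: card_Un_disjoint)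
  qed
  have hr: "?h \<noteq> r" using NC_cons.hyps(4) qr by (cases \<tau>) auto
  have hq: "?h = q \<longleftrightarrow> \<tau> = []" using qr by (cases \<tau>) auto
  have hh: "\<tau> \<noteq> [] \<Longrightarrow> ?h = hd \<tau>" by (cases \<tau>) auto
  note ka = key_arith[OF qr(1) hr]
  have Winv: "W q (r # \<sigma> @ r # \<tau>) \<longleftrightarrow> W r \<sigma> \<and> W q \<tau> \<and> (\<tau> = [] \<or> cycdec q r (hd \<tau>))"
    using W_inv[OF _ NC_cons.hyps(3)] W_cons[of r \<sigma> q \<tau>] qr NC_cons.hyps(4,5) by blast
  have cond: "(\<tau> = [] \<or> cycdec q r (hd \<tau>)) \<longleftrightarrow> (?h = q \<or> cycdec q r ?h)"
    using hq hh by auto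
  show ?case
    using E_cons[of r \<sigma> \<tau> q] card IH1 IH2 ka Winv cond by linarith
qed

definition D2 :: "nat list \<Rightarrow> bool" where
  "D2 \<pi> \<longleftrightarrow> (\<forall>x\<in>set \<pi>. count (mset \<pi>) x = 2)"

lemma av_sub:
  assumes "avoids_1212_2121 (a @ b @ c)"
  shows "avoids_1212_2121 b"
  unfolding avoids_1212_2121_def
proof (rule notI, elim exE conjE)
  fix i j k l
  assume h: "i < j" "j < k" "k < l" "l < length b" "b ! i = b ! k" "b ! j = b ! l"
  have nth: "(a @ b @ c) ! (length a + p) = b ! p" if "p < length b" for p
    using that by (simp add: nth_append)
  have "i + length a < j + length a \<and> j + length a < k + length a \<and> k + length a < l + length a \<and>
        l + length a < length (a @ b @ c) \<and>
        (a @ b @ c) ! (i + length a) = (a @ b @ c) ! (k + length a) \<and>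
        (a @ b @ c) ! (j + length a) = (a @ b @ c) ! (l + length a)"
    using h nth[of i] nth[of j] nth[of k] nth[of l] by (simp add: add.commute)
  then show False using assms unfolding avoids_1212_2121_def by blast
qed

lemma av_app:
  assumes "avoids_1212_2121 xs" "avoids_1212_2121 ys" "set xs \<inter> set ys = {}"
  shows "avoids_1212_2121 (xs @ ys)"
  unfolding avoids_1212_2121_def
proof (rule notI, elim exE conjE)
  fix i j k l
  let ?p = "xs @ ys" and ?n = "length xs"
  assume h: "i < j" "j < k" "k < l" "l < length ?p" "?p ! i = ?p ! k" "?p ! j = ?p ! l"
  have inx: "?p ! p = xs ! p \<and> xs ! p \<in> set xs" if "p < ?n" for p
    using that by (simp add: nth_append)
  have iny: "?p ! p = ys ! (p - ?n) \<and> ys ! (p - ?n) \<in> set ys" if "?n \<le> p" "p < length ?p" for p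
    using that by (simp add: nth_append)
  show False
  proof (cases "l < ?n")
    case True
    then have "i < j \<and> j < k \<and> k < l \<and> l < length xs \<and> xs ! i = xs ! k \<and> xs ! j = xs ! l"
      using h inx[of i] inx[of j] inx[of k] inx[of l] by simp
    then show False using assms(1) unfolding avoids_1212_2121_def by blast
  next
    case l: False
    show False
    proof (cases "?n \<le> i")
      case True
      then have "i - ?n < j - ?n \<and> j - ?n < k - ?n \<and> k - ?n < l - ?n \<and> l - ?n < length ys \<and>
          ys ! (i - ?n) = ys ! (k - ?n) \<and> ys ! (j - ?n) = ys ! (l - ?n)"
        using h iny[of i] iny[of j] iny[of k] iny[of l] by (simp add: less_diff_iff)
      then show False using assms(2) unfolding avoids_1212_2121_def by blast
    next
      case i: False
      show False
      proof (cases "k < ?n")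
        case True
        then have "?p ! j \<in> set xs" using inx[of j] h by simp
        moreover have "?p ! l \<in> set ys" using iny[of l] h l by simp
        ultimately show False using h assms(3) by auto
      next
        case False
        then have "?p ! i \<in> set xs" using inx[of i] i by simp
        moreover have "?p ! k \<in> set ys" using iny[of k] h False by simp
        ultimately show False using h assms(3) by auto
      qed
    qed
  qed
qed

lemma av_wrap:
  assumes "avoids_1212_2121 \<sigma>" "r \<notin> set \<sigma>"
  shows "avoids_1212_2121 (r # \<sigma> @ [r])"
  unfolding avoids_1212_2121_def
proof (rule notI, elim exE conjE)
  fix i j k l
  let ?p = "r # \<sigma> @ [r]" and ?n = "length \<sigma>"
  assume h: "i < j" "j < k" "k < l" "l < length ?p" "?p ! i = ?p ! k" "?p ! j = ?p ! l"
  have mid: "?p ! p = \<sigma> ! (p - 1) \<and> \<sigma> ! (p - 1) \<in> set \<sigma>" if "0 < p" "p \<le> ?n" for p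
    using that by (cases p) (auto simp: nth_append)
  have last: "?p ! (Suc ?n) = r" by (simp add: nth_append)
  have l: "l \<le> ?n"
  proof (rule ccontr)
    assume "\<not> l \<le> ?n"
    then have "l = Suc ?n" using h by simp
    then have "?p ! j = r" using h last by simp
    moreover have "0 < j" "j \<le> ?n" using h \<open>l = Suc ?n\<close> by auto
    ultimately show False using mid[of j] assms(2) by auto
  qed
  have i: "0 < i"
  proof (rule ccontr)
    assume "\<not> 0 < i"
    then have "?p ! k = r" using h by simp
    moreover have "0 < k" "k \<le> ?n" using h l by auto
    ultimately show False using mid[of k] assms(2) by auto
  qed
  have "i - 1 < j - 1 \<and> j - 1 < k - 1 \<and> k - 1 < l - 1 \<and> l - 1 < length \<sigma> \<and>
      \<sigma> ! (i - 1) = \<sigma> ! (k - 1) \<and> \<sigma> ! (j - 1) = \<sigma> ! (l - 1)"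
  proof -
    have ar: "i - 1 < j - 1" "j - 1 < k - 1" "k - 1 < l - 1" "l - 1 < length \<sigma>"
      using h l i by linarith+
    have "0 < j" "0 < k" "0 < l" "i \<le> ?n" "j \<le> ?n" "k \<le> ?n" using h l i by linarith+
    then show ?thesis using ar h mid[of i] mid[of j] mid[of k] mid[of l] i l by simp
  qed
  then show False using assms(1) unfolding avoids_1212_2121_def by blast
qed

lemma NC_D2_av: "NC \<pi> \<Longrightarrow> D2 \<pi> \<and> avoids_1212_2121 \<pi>"
proof (induction rule: NC.induct)
  case NC_nil
  then show ?case by (simp add: D2_def avoids_1212_2121_def)
next
  case (NC_cons \<sigma> \<tau> r)
  have "D2 (r # \<sigma> @ r # \<tau>)"
    unfolding D2_def
  proof
    fix x assume x: "x \<in> set (r # \<sigma> @ r # \<tau>)"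
    have c: "count (mset (r # \<sigma> @ r # \<tau>)) x = (if x = r then 2 else 0) + count (mset \<sigma>) x + count (mset \<tau>) x"
      by simp
    show "count (mset (r # \<sigma> @ r # \<tau>)) x = 2"
    proof (cases "x = r")
      case True then show ?thesis using c NC_cons.hyps(3,4) by (simp add: count_mset_0_iff)
    next
      case False
      then have "x \<in> set \<sigma> \<or> x \<in> set \<tau>" using x by auto
      then show ?thesis
      proof
        assume xs: "x \<in> set \<sigma>"
        then have "x \<notin> set \<tau>" using NC_cons.hyps(5) by auto
        then show ?thesis using c False xs NC_cons.IH(1) by (simp add: D2_def count_mset_0_iff)
      next
        assume xs: "x \<in> set \<tau>"
        then have "x \<notin> set \<sigma>" using NC_cons.hyps(5) by auto
        then show ?thesis using c False xs NC_cons.IH(2) by (simp add: D2_def count_mset_0_iff)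
      qed
    qed
  qed
  moreover have "avoids_1212_2121 ((r # \<sigma> @ [r]) @ \<tau>)"
    using NC_cons by (intro av_app av_wrap) auto
  ultimately show ?case by simp
qed

lemma D2_av_NC: "D2 \<pi> \<Longrightarrow> avoids_1212_2121 \<pi> \<Longrightarrow> NC \<pi>"
proof (induction "length \<pi>" arbitrary: \<pi> rule: less_induct)
  case less
  show ?case
  proof (cases \<pi>)
    case Nil then show ?thesis by (simp add: NC_nil)
  next
    case (Cons r rest)
    have cr: "count (mset \<pi>) r = 2" using less.prems(1) Cons by (simp add: D2_def)
    then have "count (mset rest) r \<noteq> 0" using Cons by simp
    then have "r \<in> set rest" using count_mset_0_iff by metis
    then obtain \<sigma> \<tau> where rest: "rest = \<sigma> @ r # \<tau>" and rs: "r \<notin> set \<sigma>"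
      using split_list_first by metis
    have pi: "\<pi> = r # \<sigma> @ r # \<tau>" using Cons rest by simp
    have "count (mset \<tau>) r = 0" using cr rs pi by (simp add: count_mset_0_iff)
    then have rt: "r \<notin> set \<tau>" by (simp add: count_mset_0_iff)
    have dis: "set \<sigma> \<inter> set \<tau> = {}"
    proof (rule equals0I)
      fix x assume "x \<in> set \<sigma> \<inter> set \<tau>"
      then obtain a b where a: "a < length \<sigma>" "\<sigma> ! a = x" and b: "b < length \<tau>" "\<tau> ! b = x"
        by (auto simp: in_set_conv_nth)
      have "0 < Suc a \<and> Suc a < Suc (length \<sigma>) \<and> Suc (length \<sigma>) < length \<sigma> + 2 + b \<and>
            length \<sigma> + 2 + b < length \<pi> \<and> \<pi> ! 0 = \<pi> ! Suc (length \<sigma>) \<and>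
            \<pi> ! Suc a = \<pi> ! (length \<sigma> + 2 + b)"
        using a b by (simp add: pi nth_append)
      then show False using less.prems(2) unfolding avoids_1212_2121_def by blast
    qed
    have cnt: "count (mset \<pi>) x = count (mset \<sigma>) x + count (mset \<tau>) x" if "x \<noteq> r" for x
      using that by (simp add: pi)
    have D1: "D2 \<sigma>" unfolding D2_def
    proof
      fix x assume x: "x \<in> set \<sigma>"
      then have "x \<noteq> r" "x \<notin> set \<tau>" using rs dis by auto
      moreover have "x \<in> set \<pi>" using x pi by simp
      then have "count (mset \<pi>) x = 2" using less.prems(1) by (simp add: D2_def)
      moreover have "count (mset \<tau>) x = 0" using \<open>x \<notin> set \<tau>\<close> by (simp add: count_mset_0_iff)
      ultimately show "count (mset \<sigma>) x = 2" using cnt[of x] by simp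
    qed
    have D2t: "D2 \<tau>" unfolding D2_def
    proof
      fix x assume x: "x \<in> set \<tau>"
      then have "x \<noteq> r" "x \<notin> set \<sigma>" using rt dis by auto
      moreover have "x \<in> set \<pi>" using x pi by simp
      then have "count (mset \<pi>) x = 2" using less.prems(1) by (simp add: D2_def)
      moreover have "count (mset \<sigma>) x = 0" using \<open>x \<notin> set \<sigma>\<close> by (simp add: count_mset_0_iff)
      ultimately show "count (mset \<tau>) x = 2" using cnt[of x] by simp
    qed
    have A1: "avoids_1212_2121 \<sigma>"
      using av_sub[of "[r]" \<sigma> "r # \<tau>"] less.prems(2) pi by simp
    have A2: "avoids_1212_2121 \<tau>"
      using av_sub[of "r # \<sigma> @ [r]" \<tau> "[]"] less.prems(2) pi by simp
    have "NC \<sigma>" using less.hyps[of \<sigma>] D1 A1 pi by simp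
    moreover have "NC \<tau>" using less.hyps[of \<tau>] D2t A2 pi by simp
    ultimately show ?thesis unfolding pi using rs rt dis by (rule NC_cons)
  qed
qed

lemma dq_card: "card {i. i < length \<pi> \<and> (\<pi> @ [q]) ! Suc i < \<pi> ! i} = dq \<pi> q"
proof (induction \<pi>)
  case Nil then show ?case by simp
next
  case (Cons x xs)
  let ?P = "\<lambda>i. ((x # xs) @ [q]) ! Suc i < (x # xs) ! i"
  let ?S = "{i. i < length xs \<and> (xs @ [q]) ! Suc i < xs ! i}"
  have eq: "{i. i < length (x # xs) \<and> ?P i} = (if ?P 0 then {0} else {}) \<union> Suc ` ?S"
    by (auto simp: image_iff less_Suc_eq_0_disj)
  have "card ((if ?P 0 then {0} else {}) \<union> Suc ` ?S) = (if ?P 0 then 1 else 0) + card (Suc ` ?S)"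
    by (auto simp: card_insert_if)
  also have "card (Suc ` ?S) = card ?S" by (simp add: card_image)
  finally show ?case using Cons eq by (simp add: hd_conv_nth)
qed

lemma des_dq:
  assumes "0 \<notin> set \<pi>"
  shows "des \<pi> = dq \<pi> 0"
proof -
  have "{i. i < length \<pi> \<and> (i = length \<pi> - 1 \<or> \<pi> ! i > \<pi> ! (i + 1))}
      = {i. i < length \<pi> \<and> (\<pi> @ [0]) ! Suc i < \<pi> ! i}"
  proof (intro Collect_cong conj_cong refl)
    fix i assume i: "i < length \<pi>"
    have pos: "0 < \<pi> ! i" using assms i nth_mem by (metis gr0I)
    show "(i = length \<pi> - 1 \<or> \<pi> ! i > \<pi> ! (i + 1)) = ((\<pi> @ [0]) ! Suc i < \<pi> ! i)"
    proof (cases "i = length \<pi> - 1")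
      case True
      then have "Suc i = length \<pi>" using i by simp
      then show ?thesis using True pos by (simp add: nth_append)
    next
      case False
      then have "Suc i < length \<pi>" using i by simp
      then show ?thesis using False by (simp add: nth_append)
    qed
  qed
  then show ?thesis unfolding des_def using dq_card by simp
qed

lemma mset_iff:
  "mset \<pi> = (\<Sum>i\<in>{1..n}. {#i, i#}) \<longleftrightarrow> set \<pi> = {1..n} \<and> D2 \<pi>"
proof -
  have c: "count (\<Sum>i\<in>{1..n}. {#i, i#}) x = (if x \<in> {1..n} then 2 else 0)" for x
  proof -
    have "count (\<Sum>i\<in>{1..n}. {#i, i#}) x = (\<Sum>i\<in>{1..n}. count {#i, i#} x)"
      by (simp add: count_sum)
    also have "\<dots> = (\<Sum>i\<in>{1..n}. if i = x then 2 else 0)"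
      by (rule sum.cong) auto
    also have "\<dots> = (if x \<in> {1..n} then 2 else 0)"
      by (simp add: sum.delta')
    finally show ?thesis .
  qed
  show ?thesis
  proof
    assume m: "mset \<pi> = (\<Sum>i\<in>{1..n}. {#i, i#})"
    have "x \<in> set \<pi> \<longleftrightarrow> x \<in> {1..n}" for x
      using c[of x] m by (metis count_mset_0_iff zero_neq_numeral)
    then have "set \<pi> = {1..n}" by blast
    moreover have "D2 \<pi>" unfolding D2_def using m c by (simp add: \<open>set \<pi> = {1..n}\<close>)
    ultimately show "set \<pi> = {1..n} \<and> D2 \<pi>" by simp
  next
    assume a: "set \<pi> = {1..n} \<and> D2 \<pi>"
    show "mset \<pi> = (\<Sum>i\<in>{1..n}. {#i, i#})"
    proof (rule multiset_eqI)
      fix x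
      show "count (mset \<pi>) x = count (\<Sum>i\<in>{1..n}. {#i, i#}) x"
      proof (cases "x \<in> set \<pi>")
        case True then show ?thesis using a c by (auto simp: D2_def)
      next
        case False then show ?thesis using a c by (auto simp: count_mset_0_iff)
      qed
    qed
  qed
qed

function par :: "nat \<Rightarrow> nat list \<Rightarrow> nat \<Rightarrow> nat" where
  "par q [] = (\<lambda>_. undefined)"
| "par q (r # rest) = (\<lambda>x. if x = r then q
      else if x \<in> set (takeWhile (\<lambda>y. y \<noteq> r) rest) then par r (takeWhile (\<lambda>y. y \<noteq> r) rest) x
      else par q (tl (dropWhile (\<lambda>y. y \<noteq> r) rest)) x)"
  by pat_completeness auto
termination
proof (relation "measure (\<lambda>(q, l). length l)")
  show "wf (measure (\<lambda>(q, l). length l))" by simp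
next
  fix q r rest
  show "((r, takeWhile (\<lambda>y. y \<noteq> r) rest), q, r # rest) \<in> measure (\<lambda>(q, l). length l)"
    using length_takeWhile_le[of "\<lambda>y. y \<noteq> r" rest] by simp
next
  fix q r rest
  show "((q, tl (dropWhile (\<lambda>y. y \<noteq> r) rest)), q, r # rest) \<in> measure (\<lambda>(q, l). length l)"
    using length_dropWhile_le[of "\<lambda>y. y \<noteq> r" rest] by simp
qed

declare par.simps(2)[simp del]

lemma par_cons:
  assumes "r \<notin> set \<sigma>"
  shows "par q (r # \<sigma> @ r # \<tau>) = (\<lambda>x. if x = r then q else if x \<in> set \<sigma> then par r \<sigma> x else par q \<tau> x)"
proof -
  have t1: "takeWhile (\<lambda>y. y \<noteq> r) (\<sigma> @ r # \<tau>) = \<sigma>" and t2: "dropWhile (\<lambda>y. y \<noteq> r) (\<sigma> @ r # \<tau>) = r # \<tau>"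
    using tw[OF assms, of \<tau>] by auto
  show ?thesis unfolding par.simps(2) t1 t2 list.sel(3) by (rule refl)
qed

lemma par_out: "x \<notin> set \<pi> \<Longrightarrow> par q \<pi> x = undefined"
proof (induction q \<pi> rule: par.induct)
  case (1 q) then show ?case by simp
next
  case (2 q r rest)
  have "set (tl (dropWhile (\<lambda>y. y \<noteq> r) rest)) \<subseteq> set rest"
    by (metis list.set_sel(2) set_dropWhileD subsetI tl_Nil)
  then show ?case using 2 by (auto dest: set_takeWhileD simp: par.simps(2))
qed

lemma reach_chain:
  assumes "reach f A P x" "\<forall>p\<in>P. reach f A Q p"
  shows "reach f A Q x"
  using assms
proof (induction rule: reach.induct)
  case (reach_base x) then show ?case by blast
next
  case (reach_step x)
  then have r: "reach f A Q (f x)" by blast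
  show ?case by (rule reach.intros(2)[OF reach_step(1) r])
qed

lemma reach_mono:
  assumes "reach f B P x" "B \<subseteq> A"
  shows "reach f A P x"
  using assms
proof (induction rule: reach.induct)
  case (reach_base x) show ?case by (rule reach.intros(1)) fact
next
  case (reach_step x)
  then have r: "reach f A P (f x)" by blast
  show ?case by (rule reach.intros(2)[OF _ r]) (use reach_step in auto)
qed

lemma reach_trap:
  assumes "reach f A P x" "x \<in> B" "\<forall>y\<in>B \<inter> A. f y \<in> B" "B \<inter> P = {}"
  shows False
  using assms by (induction rule: reach.induct) auto

lemma W_Par: "W q \<pi> \<Longrightarrow> par q \<pi> \<in> Par (set \<pi>) {q}"
proof (induction rule: W.induct)
  case (W_nil q)
  then show ?case by (simp add: Par_def fun_eq_iff)
next
  case (W_cons r \<sigma> q \<tau>)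
  have rs: "r \<notin> set \<sigma>" using W_cons.hyps(1) W_notin by blast
  let ?f = "par q (r # \<sigma> @ r # \<tau>)"
  let ?A = "set (r # \<sigma> @ r # \<tau>)"
  have f: "?f = (\<lambda>x. if x = r then q else if x \<in> set \<sigma> then par r \<sigma> x else par q \<tau> x)"
    by (rule par_cons[OF rs])
  have P1: "par r \<sigma> \<in> set \<sigma> \<rightarrow>\<^sub>E (set \<sigma> \<union> {r})" "\<forall>x\<in>set \<sigma>. reach (par r \<sigma>) (set \<sigma>) {r} x"
    using W_cons.IH(1) by (auto simp: Par_def)
  have P2: "par q \<tau> \<in> set \<tau> \<rightarrow>\<^sub>E (set \<tau> \<union> {q})" "\<forall>x\<in>set \<tau>. reach (par q \<tau>) (set \<tau>) {q} x"
    using W_cons.IH(2) by (auto simp: Par_def)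
  have "?f \<in> ?A \<rightarrow>\<^sub>E (?A \<union> {q})"
  proof -
    have "?f x \<in> ?A \<union> {q}" if "x \<in> ?A" for x
      using that P1(1) P2(1) unfolding f by (auto simp: PiE_def Pi_def)
    moreover have "?f x = undefined" if "x \<notin> ?A" for x
      using that par_out[of x \<tau> q] unfolding f by auto
    ultimately show ?thesis by (auto simp: PiE_def extensional_def)
  qed
  moreover have rr: "reach ?f ?A {q} r"
  proof -
    have "reach ?f ?A {q} (?f r)" unfolding f by (simp add: reach.intros(1))
    then show ?thesis by (rule reach.intros(2)[rotated]) simp
  qed
  moreover have "reach ?f ?A {q} x" if "x \<in> set \<sigma>" for x
  proof -
    have "reach (par r \<sigma>) (set \<sigma>) {r} x" using P1(2) that by blast
    then have "reach ?f (set \<sigma>) {r} x" by (rule reach_cong) (auto simp: f rs)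
    then have "reach ?f ?A {r} x" by (rule reach_mono) auto
    then show ?thesis by (rule reach_chain) (use rr in simp)
  qed
  moreover have "reach ?f ?A {q} x" if "x \<in> set \<tau>" for x
  proof -
    have "reach (par q \<tau>) (set \<tau>) {q} x" using P2(2) that by blast
    then have "reach ?f (set \<tau>) {q} x" by (rule reach_cong) (use W_cons.hyps(5,6) in \<open>auto simp: f\<close>)
    then show ?thesis by (rule reach_mono) auto
  qed
  ultimately show ?case unfolding Par_def by auto
qed

lemma cyc_trans: "cycdec q a b \<Longrightarrow> cycdec q b c \<Longrightarrow> cycdec q a c"
  by (auto simp: cycdec_def)

lemma cyc_asym: "cycdec q a b \<Longrightarrow> cycdec q b a \<Longrightarrow> False"
  by (auto simp: cycdec_def)

lemma W_root:
  "W q \<pi> \<Longrightarrow> x \<in> set \<pi> \<Longrightarrow> par q \<pi> x = q \<Longrightarrow> x = hd \<pi> \<or> cycdec q (hd \<pi>) x"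
proof (induction arbitrary: x rule: W.induct)
  case (W_nil q) then show ?case by simp
next
  case (W_cons r \<sigma> q \<tau>)
  have rs: "r \<notin> set \<sigma>" using W_cons.hyps(1) W_notin by blast
  note f = par_cons[OF rs, of q \<tau>]
  show ?case
  proof (cases "x = r")
    case True then show ?thesis by simp
  next
    case xr: False
    show ?thesis
    proof (cases "x \<in> set \<sigma>")
      case True
      then have "par r \<sigma> x \<in> set \<sigma> \<union> {r}"
        using W_Par[OF W_cons.hyps(1)] by (auto simp: Par_def PiE_def Pi_def)
      moreover have "par r \<sigma> x = q" using W_cons.prems xr True f by simp
      ultimately show ?thesis using W_cons.hyps(3,4) by auto
    next
      case False
      then have xt: "x \<in> set \<tau>" using W_cons.prems xr by simp
      have "par q \<tau> x = q" using W_cons.prems xr False f by simp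
      then have "x = hd \<tau> \<or> cycdec q (hd \<tau>) x" using W_cons.IH(2) xt by blast
      moreover have "cycdec q r (hd \<tau>)" using W_cons.hyps(7) xt by auto
      ultimately show ?thesis using cyc_trans by auto
    qed
  qed
qed

lemma W_desc:
  assumes "W r \<sigma>" "W q \<tau>" "r \<noteq> q" "q \<notin> set \<sigma>" "r \<notin> set \<tau>" "set \<sigma> \<inter> set \<tau> = {}"
  shows "set \<sigma> = {x \<in> set (r # \<sigma> @ r # \<tau>). x \<noteq> r \<and> reach (par q (r # \<sigma> @ r # \<tau>)) (set (r # \<sigma> @ r # \<tau>)) {r} x}"
proof -
  have rs: "r \<notin> set \<sigma>" using assms(1) W_notin by blast
  have qt: "q \<notin> set \<tau>" using assms(2) W_notin by blast
  let ?f = "par q (r # \<sigma> @ r # \<tau>)"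
  let ?A = "set (r # \<sigma> @ r # \<tau>)"
  note f = par_cons[OF rs, of q \<tau>]
  show ?thesis
  proof (intro equalityI subsetI)
    fix x assume x: "x \<in> set \<sigma>"
    have "reach (par r \<sigma>) (set \<sigma>) {r} x" using W_Par[OF assms(1)] x by (auto simp: Par_def)
    then have "reach ?f (set \<sigma>) {r} x" by (rule reach_cong) (auto simp: f rs)
    then have "reach ?f ?A {r} x" by (rule reach_mono) auto
    then show "x \<in> {x \<in> ?A. x \<noteq> r \<and> reach ?f ?A {r} x}" using x rs by auto
  next
    fix x assume x: "x \<in> {x \<in> ?A. x \<noteq> r \<and> reach ?f ?A {r} x}"
    show "x \<in> set \<sigma>"
    proof (rule ccontr)
      assume xs: "x \<notin> set \<sigma>"
      then have xt: "x \<in> set \<tau>" using x by auto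
      have "\<forall>y\<in>(set \<tau> \<union> {q}) \<inter> ?A. ?f y \<in> set \<tau> \<union> {q}"
      proof
        fix y assume y: "y \<in> (set \<tau> \<union> {q}) \<inter> ?A"
        then have yt: "y \<in> set \<tau>" using assms(3,4) qt by auto
        then have "y \<noteq> r" "y \<notin> set \<sigma>" using assms(5,6) by auto
        then have "?f y = par q \<tau> y" by (simp add: f)
        then show "?f y \<in> set \<tau> \<union> {q}"
          using W_Par[OF assms(2)] yt by (auto simp: Par_def PiE_def Pi_def)
      qed
      moreover have "(set \<tau> \<union> {q}) \<inter> {r} = {}" using assms(3,5) by auto
      ultimately show False using reach_trap[of ?f ?A "{r}" x "set \<tau> \<union> {q}"] x xt by blast
    qed
  qed
qed

lemma W_split:
  assumes "W q \<pi>" "\<pi> \<noteq> []"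
  obtains r \<sigma> \<tau> where "\<pi> = r # \<sigma> @ r # \<tau>" "W r \<sigma>" "W q \<tau>" "r \<noteq> q" "q \<notin> set \<sigma>"
    "r \<notin> set \<tau>" "set \<sigma> \<inter> set \<tau> = {}" "\<tau> = [] \<or> cycdec q r (hd \<tau>)"
proof -
  from assms(1) show thesis
  proof (rule W.cases)
    assume "\<pi> = []" then show thesis using assms(2) by simp
  next
    fix r \<sigma> qa \<tau> assume h: "q = qa" "\<pi> = r # \<sigma> @ r # \<tau>" "W r \<sigma>" "W qa \<tau>" "r \<noteq> qa" "qa \<notin> set \<sigma>"
      "r \<notin> set \<tau>" "set \<sigma> \<inter> set \<tau> = {}" "\<tau> = [] \<or> cycdec qa r (hd \<tau>)"
    show thesis using that[of r \<sigma> \<tau>] h by simp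
  qed
qed

lemma W_hd:
  assumes "W q \<tau>" "\<tau> \<noteq> []"
  shows "par q \<tau> (hd \<tau>) = q"
proof -
  obtain r \<sigma> \<tau>' where o: "\<tau> = r # \<sigma> @ r # \<tau>'" "W r \<sigma>"
    using W_split[OF assms] by metis
  have "r \<notin> set \<sigma>" using o(2) W_notin by blast
  then show ?thesis using o(1) par_cons by simp
qed

lemma W_inj: "W q \<pi>1 \<Longrightarrow> W q \<pi>2 \<Longrightarrow> set \<pi>1 = set \<pi>2 \<Longrightarrow> par q \<pi>1 = par q \<pi>2 \<Longrightarrow> \<pi>1 = \<pi>2"
proof (induction arbitrary: \<pi>2 rule: W.induct)
  case (W_nil q)
  then show ?case by simp
next
  case (W_cons r \<sigma> q \<tau>)
  let ?p1 = "r # \<sigma> @ r # \<tau>"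
  have "\<pi>2 \<noteq> []" using W_cons.prems(2) by auto
  then obtain r' \<sigma>' \<tau>' where p2: "\<pi>2 = r' # \<sigma>' @ r' # \<tau>'" "W r' \<sigma>'" "W q \<tau>'" "r' \<noteq> q" "q \<notin> set \<sigma>'"
    "r' \<notin> set \<tau>'" "set \<sigma>' \<inter> set \<tau>' = {}" "\<tau>' = [] \<or> cycdec q r' (hd \<tau>')"
    using W_split[OF W_cons.prems(1)] by metis
  have rs: "r \<notin> set \<sigma>" using W_cons.hyps(1) W_notin by blast
  have rs': "r' \<notin> set \<sigma>'" using p2(2) W_notin by blast
  have W1: "W q ?p1" using W_cons.hyps by (intro W.W_cons) auto
  define f where "f = par q ?p1"
  have f1: "f = (\<lambda>x. if x = r then q else if x \<in> set \<sigma> then par r \<sigma> x else par q \<tau> x)"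
    unfolding f_def by (rule par_cons[OF rs])
  have f2: "f = (\<lambda>x. if x = r' then q else if x \<in> set \<sigma>' then par r' \<sigma>' x else par q \<tau>' x)"
    unfolding f_def W_cons.prems(3) p2(1) by (rule par_cons[OF rs'])
  have A: "set ?p1 = set \<pi>2" by fact
  have r'in: "r' \<in> set ?p1" using A p2(1) by simp
  have fr': "par q ?p1 r' = q" using fun_cong[OF f2, of r'] unfolding f_def by simp
  have "r' = r \<or> cycdec q r r'"
    using W_root[OF W1 r'in fr'] by simp
  moreover have rin: "r \<in> set \<pi>2" using A by auto
  have fr: "par q \<pi>2 r = q" using fun_cong[OF f1, of r] W_cons.prems(3) unfolding f_def by simp
  have "r = r' \<or> cycdec q r' r"
    using W_root[OF W_cons.prems(1) rin fr] p2(1) by simp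
  ultimately have rr: "r = r'" using cyc_asym by blast
  have d1: "set \<sigma> = {x \<in> set ?p1. x \<noteq> r \<and> reach f (set ?p1) {r} x}"
    using W_desc[OF W_cons.hyps(1-2,3-6)] unfolding f_def .
  have d2: "set \<sigma>' = {x \<in> set \<pi>2. x \<noteq> r' \<and> reach (par q \<pi>2) (set \<pi>2) {r'} x}"
    using W_desc[OF p2(2-7)] unfolding p2(1)[symmetric] .
  have d2': "set \<sigma>' = {x \<in> set ?p1. x \<noteq> r \<and> reach f (set ?p1) {r} x}"
    using d2 unfolding A[symmetric] rr[symmetric] W_cons.prems(3)[symmetric] f_def[symmetric] .
  have s\<sigma>: "set \<sigma> = set \<sigma>'" using d1 d2' by simp
  have s\<tau>: "set \<tau> = set \<tau>'"
  proof -
    have t1: "set \<tau> = set ?p1 - insert r (set \<sigma>)" using W_cons.hyps(5,6) by auto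
    have t2: "set \<tau>' = set \<pi>2 - insert r' (set \<sigma>')" using p2(1,6,7) by auto
    have "set \<tau> = set \<pi>2 - insert r' (set \<sigma>')" using t1 unfolding A unfolding rr s\<sigma> .
    then show ?thesis using t2 by simp
  qed
  have "par r \<sigma> = par r \<sigma>'"
  proof
    fix x show "par r \<sigma> x = par r \<sigma>' x"
    proof (cases "x \<in> set \<sigma>")
      case True
      then have "x \<noteq> r" using rs by auto
      then show ?thesis using fun_cong[OF f1, of x] fun_cong[OF f2, of x] True s\<sigma> rr by simp
    next
      case False then show ?thesis using par_out s\<sigma> by metis
    qed
  qed
  then have "\<sigma> = \<sigma>'" using W_cons.IH(1)[OF p2(2)[folded rr] s\<sigma>] by simp
  have "par q \<tau> = par q \<tau>'"
  proof
    fix x show "par q \<tau> x = par q \<tau>' x"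
    proof (cases "x \<in> set \<tau>")
      case True
      then have "x \<noteq> r" "x \<notin> set \<sigma>" using W_cons.hyps(5,6) by auto
      then show ?thesis using fun_cong[OF f1, of x] fun_cong[OF f2, of x] s\<sigma> rr by simp
    next
      case False then show ?thesis using par_out s\<tau> by metis
    qed
  qed
  then have "\<tau> = \<tau>'" using W_cons.IH(2)[OF p2(3) s\<tau>] by simp
  show ?case using p2(1) rr \<open>\<sigma> = \<sigma>'\<close> \<open>\<tau> = \<tau>'\<close> by simp
qed

lemma reach_exit: "reach f A P x \<Longrightarrow> x \<notin> P \<Longrightarrow> \<exists>y\<in>A. f y \<in> P"
  by (induction rule: reach.induct) auto

lemma reach_restrict1:
  assumes "reach f S {r} x" "S1 = {x \<in> S. x \<noteq> r \<and> reach f S {r} x}"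
  shows "reach (restrict f S1) S1 {r} x"
  using assms
proof (induction rule: reach.induct)
  case (reach_base x) show ?case by (rule reach.intros(1)) (use reach_base in simp)
next
  case (reach_step x)
  show ?case
  proof (cases "x = r")
    case True then show ?thesis by (simp add: reach.intros(1))
  next
    case False
    have "reach f S {r} x" using reach_step(1,2) by (rule reach.intros(2))
    then have x: "x \<in> S1" using reach_step False by auto
    have fx: "restrict f S1 x = f x" using x by simp
    have ih: "reach (restrict f S1) S1 {r} (f x)" using reach_step.IH reach_step.prems by blast
    show ?thesis by (rule reach.intros(2)[OF x]) (unfold fx, rule ih)
  qed
qed

lemma reach_restrict2:
  assumes "reach f S {q} x" "x \<in> S2" "S2 \<subseteq> S" "q \<notin> S" "\<forall>y\<in>S2. f y \<in> S2 \<union> {q}"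
  shows "reach (restrict f S2) S2 {q} x"
  using assms
proof (induction rule: reach.induct)
  case (reach_base x) then show ?case by auto
next
  case (reach_step x)
  have fx: "restrict f S2 x = f x" using reach_step by simp
  show ?case
  proof (cases "f x = q")
    case True
    then have "reach (restrict f S2) S2 {q} (restrict f S2 x)" using fx by (simp add: reach.intros(1))
    then show ?thesis by (rule reach.intros(2)[OF reach_step.prems(1)])
  next
    case False
    then have "f x \<in> S2" using reach_step by auto
    then have "reach (restrict f S2) S2 {q} (f x)" using reach_step by blast
    then have "reach (restrict f S2) S2 {q} (restrict f S2 x)" unfolding fx .
    then show ?thesis by (rule reach.intros(2)[OF reach_step.prems(1)])
  qed
qed

lemma Par_W:
  "finite S \<Longrightarrow> q \<notin> S \<Longrightarrow> f \<in> Par S {q} \<Longrightarrow> \<exists>\<pi>. W q \<pi> \<and> set \<pi> = S \<and> par q \<pi> = f"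
proof (induction "card S" arbitrary: S q f rule: less_induct)
  case less
  have fP: "f \<in> S \<rightarrow>\<^sub>E (S \<union> {q})" "\<forall>x\<in>S. reach f S {q} x" using less.prems(3) by (auto simp: Par_def)
  show ?case
  proof (cases "S = {}")
    case True
    then have "f = (\<lambda>_. undefined)" using fP by auto
    then show ?thesis using True by (intro exI[of _ "[]"]) (simp add: W_nil)
  next
    case False
    define R where "R = {x \<in> S. f x = q}"
    obtain x0 where "x0 \<in> S" using False by auto
    then have "\<exists>y\<in>S. f y \<in> {q}" using reach_exit[of f S "{q}" x0] fP less.prems(2) by auto
    then have Rne: "R \<noteq> {}" by (auto simp: R_def)
    have Rfin: "finite R" using less.prems(1) by (auto simp: R_def)
    define r where "r = (if \<exists>x\<in>R. x < q then Max {x\<in>R. x < q} else Max R)"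
    have rR: "r \<in> R"
    proof (cases "\<exists>x\<in>R. x < q")
      case True
      then have "{x\<in>R. x < q} \<noteq> {}" "finite {x\<in>R. x < q}" using Rfin by auto
      then have "Max {x\<in>R. x < q} \<in> {x\<in>R. x < q}" by (rule Max_in[rotated])
      then show ?thesis using True unfolding r_def by simp
    next
      case False then show ?thesis using Rne Rfin Max_in unfolding r_def by auto
    qed
    have rmin: "cycdec q r x" if "x \<in> R" "x \<noteq> r" for x
    proof (cases "\<exists>x\<in>R. x < q")
      case True
      then have fin: "{x\<in>R. x < q} \<noteq> {}" "finite {x\<in>R. x < q}" using Rfin by auto
      have rq: "r < q" using Max_in[OF fin(2,1)] True unfolding r_def by auto
      have le: "x < q \<longrightarrow> x \<le> r" using that Max_ge[OF fin(2), of x] True unfolding r_def by auto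
      have "x \<noteq> q" using that less.prems(2) by (auto simp: R_def)
      then have "x < q \<or> q < x" by linarith
      then show ?thesis
      proof
        assume "x < q" then show ?thesis using le rq that(2) unfolding cycdec_def by auto
      next
        assume "q < x" then show ?thesis using rq unfolding cycdec_def by auto
      qed
    next
      case False
      have "x \<le> r" using that Max_ge[OF Rfin, of x] False unfolding r_def by auto
      moreover have "x \<noteq> q" "r \<noteq> q" using that rR less.prems(2) by (auto simp: R_def)
      ultimately show ?thesis using False that rR by (auto simp: cycdec_def)
    qed
    have rS: "r \<in> S" "f r = q" using rR by (auto simp: R_def)
    define S1 where "S1 = {x \<in> S. x \<noteq> r \<and> reach f S {r} x}"
    define S2 where "S2 = S - insert r S1"
    have fS: "f x \<in> S \<union> {q}" if "x \<in> S" for x using fP(1) that by auto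
    have notq: "\<not> reach f S {r} q"
    proof
      assume "reach f S {r} q"
      then show False using less.prems(2) rS by (cases rule: reach.cases) auto
    qed
    have S1img: "f x \<in> S1 \<union> {r}" if "x \<in> S1" for x
    proof -
      have "reach f S {r} x" "x \<noteq> r" "x \<in> S" using that by (auto simp: S1_def)
      then have rf: "reach f S {r} (f x)" by (cases rule: reach.cases) auto
      then have "f x \<noteq> q" using notq by auto
      then have "f x \<in> S" using fS \<open>x \<in> S\<close> by auto
      then show ?thesis using rf by (auto simp: S1_def)
    qed
    have S2img: "f x \<in> S2 \<union> {q}" if "x \<in> S2" for x
    proof -
      have x: "x \<in> S" "x \<noteq> r" "x \<notin> S1" using that by (auto simp: S2_def)
      show ?thesis
      proof (cases "f x = q")
        case True then show ?thesis by simp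
      next
        case False
        then have fxS: "f x \<in> S" using fS x by auto
        have "\<not> reach f S {r} (f x)"
        proof
          assume "reach f S {r} (f x)"
          then have "reach f S {r} x" using x(1) by (rule reach.intros(2)[rotated])
          then show False using x by (auto simp: S1_def)
        qed
        then have "f x \<noteq> r" "f x \<notin> S1" by (auto simp: S1_def intro: reach.intros(1))
        then show ?thesis using fxS by (auto simp: S2_def)
      qed
    qed
    have S1S: "S1 \<subseteq> S" "r \<notin> S1" by (auto simp: S1_def)
    have S2S: "S2 \<subseteq> S" "r \<notin> S2" "S1 \<inter> S2 = {}" by (auto simp: S2_def)
    have fin1: "finite S1" "finite S2"
      using finite_subset[OF S1S(1) less.prems(1)] finite_subset[OF S2S(1) less.prems(1)] by auto
    have c1: "card S1 < card S" using S1S rS less.prems(1) by (intro psubset_card_mono) auto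
    have c2: "card S2 < card S" using S2S rS less.prems(1) by (intro psubset_card_mono) auto
    have P1: "restrict f S1 \<in> Par S1 {r}"
    proof -
      have "restrict f S1 \<in> S1 \<rightarrow>\<^sub>E (S1 \<union> {r})" using S1img by auto
      moreover have "reach (restrict f S1) S1 {r} x" if "x \<in> S1" for x
      proof -
        have "reach f S {r} x" using that by (simp add: S1_def)
        then show ?thesis by (rule reach_restrict1[OF _ S1_def])
      qed
      ultimately show ?thesis by (auto simp: Par_def)
    qed
    have P2: "restrict f S2 \<in> Par S2 {q}"
    proof -
      have "restrict f S2 \<in> S2 \<rightarrow>\<^sub>E (S2 \<union> {q})" using S2img by auto
      moreover have "reach (restrict f S2) S2 {q} x" if "x \<in> S2" for x
      proof -
        have "reach f S {q} x" using that fP(2) S2S by auto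
        moreover have "\<forall>y\<in>S2. f y \<in> S2 \<union> {q}" using S2img by blast
        ultimately show ?thesis using reach_restrict2 that S2S(1) less.prems(2) by blast
      qed
      ultimately show ?thesis by (auto simp: Par_def)
    qed
    obtain \<sigma> where \<sigma>: "W r \<sigma>" "set \<sigma> = S1" "par r \<sigma> = restrict f S1"
      using less.hyps[OF c1 fin1(1) S1S(2) P1] by blast
    obtain \<tau> where \<tau>: "W q \<tau>" "set \<tau> = S2" "par q \<tau> = restrict f S2"
      using less.hyps[OF c2 fin1(2) _ P2] S2S(1) less.prems(2) by blast
    have rq: "r \<noteq> q" using rS less.prems(2) by auto
    have cond: "\<tau> = [] \<or> cycdec q r (hd \<tau>)"
    proof (cases "\<tau> = []")
      case False
      then have h: "hd \<tau> \<in> S2" using \<tau>(2) by (metis list.set_sel(1))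
      have "par q \<tau> (hd \<tau>) = q" using W_hd[OF \<tau>(1) False] .
      then have "f (hd \<tau>) = q" using \<tau>(3) h by simp
      then have "hd \<tau> \<in> R" "hd \<tau> \<noteq> r" using h S2S by (auto simp: R_def)
      then show ?thesis using rmin by auto
    qed simp
    have W: "W q (r # \<sigma> @ r # \<tau>)"
      using \<sigma> \<tau> rq S1S S2S less.prems(2) cond by (intro W_cons) auto
    have st: "set (r # \<sigma> @ r # \<tau>) = S" using \<sigma>(2) \<tau>(2) S1S rS by (auto simp: S2_def)
    have "par q (r # \<sigma> @ r # \<tau>) = f"
    proof
      fix x
      have rs: "r \<notin> set \<sigma>" using \<sigma>(2) S1S by simp
      show "par q (r # \<sigma> @ r # \<tau>) x = f x"
      proof (cases "x \<in> S")
        case True then show ?thesis using rS \<sigma> \<tau> by (auto simp: par_cons[OF rs] S2_def)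
      next
        case False
        then have "f x = undefined" using fP(1) by (auto simp: PiE_def extensional_def)
        moreover have "x \<notin> set (r # \<sigma> @ r # \<tau>)" using False unfolding st .
        ultimately show ?thesis using par_out by metis
      qed
    qed
    then show ?thesis using W st by blast
  qed
qed

lemma card_W: "finite S \<Longrightarrow> q \<notin> S \<Longrightarrow> card {\<pi>. W q \<pi> \<and> set \<pi> = S} = card (Par S {q})"
proof -
  assume a: "finite S" "q \<notin> S"
  have "bij_betw (par q) {\<pi>. W q \<pi> \<and> set \<pi> = S} (Par S {q})"
    unfolding bij_betw_def
  proof
    show "inj_on (par q) {\<pi>. W q \<pi> \<and> set \<pi> = S}"
      by (rule inj_onI) (auto intro: W_inj)
    show "par q ` {\<pi>. W q \<pi> \<and> set \<pi> = S} = Par S {q}"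
    proof (intro equalityI subsetI)
      fix f assume "f \<in> par q ` {\<pi>. W q \<pi> \<and> set \<pi> = S}"
      then show "f \<in> Par S {q}" using W_Par by auto
    next
      fix f assume "f \<in> Par S {q}"
      then obtain \<pi> where "W q \<pi>" "set \<pi> = S" "par q \<pi> = f" using Par_W a by blast
      then show "f \<in> par q ` {\<pi>. W q \<pi> \<and> set \<pi> = S}" by blast
    qed
  qed
  then show ?thesis by (rule bij_betw_same_card)
qed

theorem theorem2p2:
  fixes n :: nat
  assumes "n \<ge> 1"
  shows "card {\<pi>. quasi_stirling n \<pi> \<and> des \<pi> = n} = (n + 1) ^ (n - 1)"
proof -
  have eq: "{\<pi>. quasi_stirling n \<pi> \<and> des \<pi> = n} = {\<pi>. W 0 \<pi> \<and> set \<pi> = {1..n}}"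
  proof (rule Collect_cong)
    fix \<pi>
    have Edq: "E \<pi> 0 = dq \<pi> 0" by (simp add: E_def)
    show "(quasi_stirling n \<pi> \<and> des \<pi> = n) \<longleftrightarrow> (W 0 \<pi> \<and> set \<pi> = {1..n})"
    proof
      assume a: "quasi_stirling n \<pi> \<and> des \<pi> = n"
      then have s: "set \<pi> = {1..n}" "D2 \<pi>" "avoids_1212_2121 \<pi>"
        using mset_iff[of \<pi> n] by (auto simp: quasi_stirling_def is_perm_of_double_multiset_def)
      have nc: "NC \<pi>" using D2_av_NC s(2,3) by blast
      have z: "0 \<notin> set \<pi>" using s(1) by auto
      have "E \<pi> 0 = card (set \<pi>)" using Edq des_dq[OF z] a s(1) by simp
      then have "W 0 \<pi>" using main_char[OF nc z] by blast
      then show "W 0 \<pi> \<and> set \<pi> = {1..n}" using s(1) by simp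
    next
      assume a: "W 0 \<pi> \<and> set \<pi> = {1..n}"
      have nc: "NC \<pi>" using a W_NC by blast
      have s: "D2 \<pi>" "avoids_1212_2121 \<pi>" using NC_D2_av[OF nc] by auto
      have z: "0 \<notin> set \<pi>" using a W_notin by blast
      have "E \<pi> 0 = card (set \<pi>)" using main_char[OF nc z] a by blast
      then have "des \<pi> = n" using Edq des_dq[OF z] a by simp
      moreover have "quasi_stirling n \<pi>"
        using mset_iff[of \<pi> n] a s by (auto simp: quasi_stirling_def is_perm_of_double_multiset_def)
      ultimately show "quasi_stirling n \<pi> \<and> des \<pi> = n" by simp
    qed
  qed
  have "card {\<pi>. W 0 \<pi> \<and> set \<pi> = {1..n}} = card (Par {1..n} {0})"
    by (rule card_W) auto
  also have "\<dots> = Acnt n 1" by (subst card_Par) auto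
  also have "\<dots> = (n + 1) ^ (n - 1)" using assms by (simp add: Acnt_def)
  finally show ?thesis using eq by simp
qed

end
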